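(* Let $X$ be a locally convex space, let $T:X\rightrightarrows X^{*}$, and let $V\subset X$ with $V\cap D(T)\neq\emptyset$. The following are equivalent: (i) $V$ locates $T$; (ii) $T$ is $V$-NI and $\operatorname{Pr}_{X}[\varphi_{T|_{V}}=c]\cap V\subset D(T)$; (iii) $\operatorname{Pr}_{X}(\operatorname{dom}\varphi_{T|_{V}})\cap V\subset\operatorname{Pr}_{X}([\varphi_{T|_{V}}\ge c]\cap\operatorname{dom}\varphi_{T|_{V}})$ and $\operatorname{Pr}_{X}[\varphi_{T|_{V}}=c]\cap V\subset D(T)$. If, in addition, $T|_{V}\in\mathcal{M}(X)$, then $V$ locates $T$ if and only if $T$ is $V$-NI and $\operatorname{Pr}_{X}[\varphi_{T|_{V}}=c]\cap V=D(T)\cap V$.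
   Context: $X$ is a non-trivial Hausdorff locally convex space, $X^*$ its dual, $c(x,x^* )=\langle x,x^*\rangle$ on $Z=X\times X^*$. Operators are identified with their graphs; $D(T)$ is the domain; $T|_V$ has graph $\operatorname{Graph}T\cap(V\times X^* )$; $\operatorname{Pr}_X$ is the projection onto $X$. $\varphi_{T}(x,x^{*})=\sup\{\langle x,u^{*}\rangle+\langle u,x^{*}\rangle-\langle u,u^{*}\rangle\mid(u,u^{*})\in T\}$ ($\sup\emptyset=-\infty$); $\operatorname{dom}f=\{f<\infty\}$; $[f\le g]=\{z\mid f(z)\le g(z)\}$, etc. $\mathcal M(X)$: monotone operators with non-empty graph. $V$ locates $T$ if $\operatorname{Pr}_X([\varphi_{T|_V}\le c])\cap V\subset D(T)$; $T$ is $V$-NI if $\varphi_{T|_V}\ge c$ on $V\times X^*$. *)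

theory Defs
  imports "HOL-Analysis.Analysis" "HOL-Library.Extended_Real"
begin

definition locally_convex_space :: "'a::{real_vector,t2_space} itself \<Rightarrow> bool" where
  "locally_convex_space _ \<longleftrightarrow>
     continuous_on UNIV (\<lambda>p::'a \<times> 'a. fst p + snd p) \<and>
     continuous_on UNIV (\<lambda>p::real \<times> 'a. fst p *\<^sub>R snd p) \<and>
     (\<forall>U::'a set. open U \<and> 0 \<in> U \<longrightarrow> (\<exists>W. open W \<and> convex W \<and> 0 \<in> W \<and> W \<subseteq> U)) \<and>
     (\<exists>x::'a. x \<noteq> 0)"

text \<open>Topological dual X^*: continuous linear functionals. Pairing <x,x^*> = x^* x.\<close>
definition dual_space :: "('a::{real_vector,topological_space} \<Rightarrow> real) set" where
  "dual_space = {f. linear f \<and> continuous_on UNIV f}"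

definition Zsp :: "('a::{real_vector,topological_space} \<times> ('a \<Rightarrow> real)) set" where
  "Zsp = UNIV \<times> dual_space"

definition cpl :: "'a \<times> ('a \<Rightarrow> real) \<Rightarrow> real" where
  "cpl z = snd z (fst z)"

text \<open>Fitzpatrick function (sup of the empty set is -\<infinity>).\<close>
definition fitz :: "('a \<times> ('a \<Rightarrow> real)) set \<Rightarrow> 'a \<times> ('a \<Rightarrow> real) \<Rightarrow> ereal" where
  "fitz T z = (SUP p\<in>T. ereal (snd p (fst z) + snd z (fst p) - snd p (fst p)))"

definition restr :: "('a \<times> 'b) set \<Rightarrow> 'a set \<Rightarrow> ('a \<times> 'b) set" where
  "restr T V = T \<inter> (V \<times> UNIV)"

definition dom_op :: "('a \<times> 'b) set \<Rightarrow> 'a set" where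
  "dom_op T = fst ` T"

definition PrX :: "('a \<times> 'b) set \<Rightarrow> 'a set" where
  "PrX S = fst ` S"

definition fdom :: "('a::{real_vector,topological_space} \<times> ('a \<Rightarrow> real) \<Rightarrow> ereal) \<Rightarrow> ('a \<times> ('a \<Rightarrow> real)) set" where
  "fdom f = {z \<in> Zsp. f z < \<infinity>}"

definition monotone_op :: "('a::real_vector \<times> ('a \<Rightarrow> real)) set \<Rightarrow> bool" where
  "monotone_op T \<longleftrightarrow> (\<forall>(x,f)\<in>T. \<forall>(y,g)\<in>T. f x - f y - g x + g y \<ge> 0)"

definition MX :: "('a::{real_vector,topological_space} \<times> ('a \<Rightarrow> real)) set set" where
  "MX = {T. T \<subseteq> Zsp \<and> T \<noteq> {} \<and> monotone_op T}"

definition locates :: "'a::{real_vector,topological_space} set \<Rightarrow> ('a \<times> ('a \<Rightarrow> real)) set \<Rightarrow> bool" where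
  "locates V T \<longleftrightarrow>
     PrX {z \<in> Zsp. fitz (restr T V) z \<le> ereal (cpl z)} \<inter> V \<subseteq> dom_op T"

definition V_NI :: "'a::{real_vector,topological_space} set \<Rightarrow> ('a \<times> ('a \<Rightarrow> real)) set \<Rightarrow> bool" where
  "V_NI V T \<longleftrightarrow> (\<forall>z \<in> V \<times> dual_space. fitz (restr T V) z \<ge> ereal (cpl z))"

end

theory Submission
  imports Defs
begin

lemma fitz_upper:
  "p \<in> S \<Longrightarrow> ereal (snd p (fst z) + snd z (fst p) - snd p (fst p)) \<le> fitz S z"
  unfolding fitz_def by (rule SUP_upper)

lemma fitz_le_iff:
  "fitz S z \<le> ereal r \<longleftrightarrow> (\<forall>p\<in>S. snd p (fst z) + snd z (fst p) - snd p (fst p) \<le> r)"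
  unfolding fitz_def by (simp add: SUP_le_iff)

lemma Zsp_iff: "z \<in> Zsp \<longleftrightarrow> snd z \<in> dual_space"
  by (cases z) (auto simp: Zsp_def)

lemma ivt:
  fixes S :: "('a::{real_vector,topological_space} \<times> ('a \<Rightarrow> real)) set"
  assumes xs: "xs \<in> dual_space" and ys: "ys \<in> dual_space"
    and h0: "fitz S (x,xs) \<le> ereal (xs x)"
    and h1: "fitz S (x,ys) \<ge> ereal (ys x)"
    and h2: "fitz S (x,ys) < \<infinity>"
  shows "\<exists>w\<in>dual_space. fitz S (x,w) = ereal (w x)"
proof -
  define w where "w t = (\<lambda>v. xs v + t * (ys v - xs v))" for t :: real
  define d where "d p t = snd p x + w t (fst p) - snd p (fst p) - w t x" for p and t :: real
  define A where "A p = snd p x + xs (fst p) - snd p (fst p) - xs x" for p :: "'a \<times> ('a \<Rightarrow> real)"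
  define B where "B p = (ys (fst p) - xs (fst p)) - (ys x - xs x)" for p :: "'a \<times> ('a \<Rightarrow> real)"
  have dAB: "d p t = A p + t * B p" for p t
    unfolding d_def w_def A_def B_def by (simp add: algebra_simps)
  have w0: "w 0 = xs" and w1: "w 1 = ys" unfolding w_def by auto
  have fle: "fitz S (x, w t) \<le> ereal (w t x) \<longleftrightarrow> (\<forall>p\<in>S. d p t \<le> 0)" for t
    unfolding fitz_le_iff d_def by auto
  define SS where "SS = {t\<in>{0..1::real}. \<forall>p\<in>S. d p t \<le> 0}"
  have SSeq: "SS = {0..1} \<inter> (\<Inter>p\<in>S. {t. A p + t * B p \<le> 0})"
    unfolding SS_def dAB by auto
  have "closed SS" unfolding SSeq
    by (intro closed_Int closed_INT ballI closed_Collect_le continuous_intros)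
  have "0 \<in> SS" using h0 unfolding SS_def using fle[of 0] w0 by auto
  have bdd: "bdd_above SS" unfolding SS_def by (rule bdd_aboveI[of _ 1]) auto
  define t0 where "t0 = Sup SS"
  have t0S: "t0 \<in> SS" unfolding t0_def
    using closed_contains_Sup[OF _ bdd \<open>closed SS\<close>] \<open>0 \<in> SS\<close> by auto
  have t0max: "t \<le> t0" if "t \<in> SS" for t unfolding t0_def using cSup_upper[OF that bdd] .
  have t01: "0 \<le> t0" "t0 \<le> 1" using t0S unfolding SS_def by auto
  have wdual: "w t \<in> dual_space" for t
  proof -
    have lx: "linear xs" and ly: "linear ys" and cx: "continuous_on UNIV xs"
      and cy: "continuous_on UNIV ys" using xs ys by (auto simp: dual_space_def)
    have "linear (w t)" unfolding w_def
      by (rule linearI) (simp_all add: linear_add[OF lx] linear_add[OF ly]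
          linear_scale[OF lx] linear_scale[OF ly] algebra_simps)
    moreover have "continuous_on UNIV (w t)" unfolding w_def
      by (intro continuous_intros cx cy)
    ultimately show ?thesis by (simp add: dual_space_def)
  qed
  have le0: "fitz S (x, w t0) \<le> ereal (w t0 x)" using t0S fle unfolding SS_def by auto
  have ge0: "fitz S (x, w t0) \<ge> ereal (w t0 x)"
  proof (rule ccontr)
    assume "\<not> ?thesis"
    hence lt: "fitz S (x, w t0) < ereal (w t0 x)" by simp
    then obtain r where r1: "fitz S (x, w t0) < ereal r" and r2: "ereal r < ereal (w t0 x)"
      using ereal_dense2 by blast
    obtain M where M: "fitz S (x, ys) < ereal M" using h2 ereal_dense2 by blast
    have dt0: "d p t0 \<le> r - w t0 x" if "p \<in> S" for p
    proof -
      have "ereal (snd p x + w t0 (fst p) - snd p (fst p)) \<le> fitz S (x, w t0)"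
        using fitz_upper[OF that, of "(x, w t0)"] by simp
      hence "snd p x + w t0 (fst p) - snd p (fst p) \<le> r" using r1
        by (metis ereal_less_eq(3) le_less_trans less_imp_le)
      thus ?thesis unfolding d_def by simp
    qed
    define K where "K = M - ys x"
    have d1: "d p 1 \<le> K" if "p \<in> S" for p
    proof -
      have "ereal (snd p x + ys (fst p) - snd p (fst p)) \<le> fitz S (x, ys)"
        using fitz_upper[OF that, of "(x, ys)"] by simp
      hence "snd p x + ys (fst p) - snd p (fst p) \<le> M" using M
        by (metis ereal_less_eq(3) le_less_trans less_imp_le)
      thus ?thesis unfolding d_def K_def w1 by simp
    qed
    have "t0 \<noteq> 1" using lt h1 w1 by auto
    hence t0lt: "t0 < 1" using t01 by simp
    define \<delta> where "\<delta> = w t0 x - r"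
    have dpos: "\<delta> > 0" using r2 unfolding \<delta>_def by simp
    define l where "l = \<delta> / (\<delta> + \<bar>K\<bar> + 1)"
    have lpos: "l > 0" unfolding l_def using dpos by simp
    have lle: "l < 1" unfolding l_def using dpos by (simp add: divide_less_eq) (smt (verit))
    have lmul: "l * (\<delta> + \<bar>K\<bar> + 1) = \<delta>" unfolding l_def using dpos by simp
    define s where "s = t0 + l * (1 - t0)"
    have "s \<in> SS"
    proof -
      have "0 \<le> s" "s \<le> 1" unfolding s_def using t01 lpos lle
        by (auto intro!: mult_nonneg_nonneg) (smt (verit) mult_left_le_one_le)
      moreover have "d p s \<le> 0" if "p \<in> S" for p
      proof -
        have id: "d p s = (1 - l) * d p t0 + l * d p 1"
          unfolding dAB s_def by (simp add: algebra_simps)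
        have a: "(1 - l) * d p t0 \<le> (1 - l) * (- \<delta>)"
          using dt0[OF that] lle unfolding \<delta>_def by (intro mult_left_mono) auto
        have b: "l * d p 1 \<le> l * K" using d1[OF that] lpos by (intro mult_left_mono) auto
        have c: "l * K \<le> l * (\<bar>K\<bar> + 1)" using lpos by (intro mult_left_mono) auto
        have "(1 - l) * (- \<delta>) + l * (\<bar>K\<bar> + 1) = 0" using lmul by (simp add: algebra_simps)
        thus ?thesis using id a b c by linarith
      qed
      ultimately show ?thesis unfolding SS_def by auto
    qed
    hence "s \<le> t0" by (rule t0max)
    moreover have "s > t0" unfolding s_def using lpos t0lt by simp
    ultimately show False by simp
  qed
  show ?thesis using le0 ge0 wdual by (intro bexI[of _ "w t0"]) auto
qed

theorem theorem2p11:
  fixes T :: "('a::{real_vector,t2_space} \<times> ('a \<Rightarrow> real)) set"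
    and V :: "'a set"
  assumes "locally_convex_space TYPE('a)"
    and "T \<subseteq> Zsp"
    and "V \<inter> dom_op T \<noteq> {}"
  shows "(locates V T \<longleftrightarrow>
           V_NI V T \<and>
           PrX {z \<in> Zsp. fitz (restr T V) z = ereal (cpl z)} \<inter> V \<subseteq> dom_op T)
       \<and> (locates V T \<longleftrightarrow>
           PrX (fdom (fitz (restr T V))) \<inter> V
             \<subseteq> PrX ({z \<in> Zsp. fitz (restr T V) z \<ge> ereal (cpl z)} \<inter> fdom (fitz (restr T V))) \<and>
           PrX {z \<in> Zsp. fitz (restr T V) z = ereal (cpl z)} \<inter> V \<subseteq> dom_op T)
       \<and> (restr T V \<in> MX \<longrightarrow>
           (locates V T \<longleftrightarrow>
              V_NI V T \<and>
              PrX {z \<in> Zsp. fitz (restr T V) z = ereal (cpl z)} \<inter> V = dom_op T \<inter> V))"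
proof -
  let ?f = "fitz (restr T V)"
  have NI: "V_NI V T" if loc: "locates V T"
    unfolding V_NI_def
  proof (intro ballI)
    fix z :: "'a \<times> ('a \<Rightarrow> real)" assume z: "z \<in> V \<times> dual_space"
    show "ereal (cpl z) \<le> ?f z"
    proof (rule ccontr)
      assume "\<not> ?thesis"
      hence lt: "?f z < ereal (cpl z)" by simp
      have "z \<in> Zsp" using z by (auto simp: Zsp_def)
      hence "fst z \<in> PrX {z \<in> Zsp. ?f z \<le> ereal (cpl z)} \<inter> V"
        using lt z unfolding PrX_def by (auto intro!: imageI)
      hence "fst z \<in> dom_op T" using loc unfolding locates_def by blast
      then obtain u where u: "(fst z, u) \<in> T" unfolding dom_op_def by force
      hence "(fst z, u) \<in> restr T V" using z unfolding restr_def by auto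
      from fitz_upper[OF this, of z] have "ereal (cpl z) \<le> ?f z" by (simp add: cpl_def)
      thus False using lt by simp
    qed
  qed
  have Esub: "PrX {z \<in> Zsp. ?f z = ereal (cpl z)} \<inter> V \<subseteq> dom_op T" if loc: "locates V T"
    using loc unfolding locates_def PrX_def by fastforce
  have P1: "locates V T \<longleftrightarrow> V_NI V T \<and>
           PrX {z \<in> Zsp. ?f z = ereal (cpl z)} \<inter> V \<subseteq> dom_op T"
  proof
    assume "locates V T" thus "V_NI V T \<and> PrX {z \<in> Zsp. ?f z = ereal (cpl z)} \<inter> V \<subseteq> dom_op T"
      using NI Esub by blast
  next
    assume h: "V_NI V T \<and> PrX {z \<in> Zsp. ?f z = ereal (cpl z)} \<inter> V \<subseteq> dom_op T"
    show "locates V T" unfolding locates_def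
    proof
      fix x assume "x \<in> PrX {z \<in> Zsp. ?f z \<le> ereal (cpl z)} \<inter> V"
      then obtain z where z: "z \<in> Zsp" "?f z \<le> ereal (cpl z)" "fst z = x" "x \<in> V"
        unfolding PrX_def by auto
      have "z \<in> V \<times> dual_space" using z by (cases z) (auto simp: Zsp_def)
      hence "?f z \<ge> ereal (cpl z)" using h unfolding V_NI_def by blast
      hence "x \<in> PrX {z \<in> Zsp. ?f z = ereal (cpl z)} \<inter> V"
        using z unfolding PrX_def by (auto intro!: image_eqI[of _ _ z])
      thus "x \<in> dom_op T" using h by blast
    qed
  qed
  have P2: "locates V T \<longleftrightarrow>
           PrX (fdom ?f) \<inter> V \<subseteq> PrX ({z \<in> Zsp. ?f z \<ge> ereal (cpl z)} \<inter> fdom ?f) \<and>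
           PrX {z \<in> Zsp. ?f z = ereal (cpl z)} \<inter> V \<subseteq> dom_op T"
  proof
    assume loc: "locates V T"
    have "PrX (fdom ?f) \<inter> V \<subseteq> PrX ({z \<in> Zsp. ?f z \<ge> ereal (cpl z)} \<inter> fdom ?f)"
    proof
      fix x assume "x \<in> PrX (fdom ?f) \<inter> V"
      then obtain z where z: "z \<in> Zsp" "?f z < \<infinity>" "fst z = x" "x \<in> V"
        unfolding PrX_def fdom_def by auto
      have "z \<in> V \<times> dual_space" using z by (cases z) (auto simp: Zsp_def)
      hence "?f z \<ge> ereal (cpl z)" using NI[OF loc] unfolding V_NI_def by blast
      thus "x \<in> PrX ({z \<in> Zsp. ?f z \<ge> ereal (cpl z)} \<inter> fdom ?f)"
        using z unfolding PrX_def fdom_def by (auto intro!: image_eqI[of _ _ z])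
    qed
    thus "PrX (fdom ?f) \<inter> V \<subseteq> PrX ({z \<in> Zsp. ?f z \<ge> ereal (cpl z)} \<inter> fdom ?f) \<and>
           PrX {z \<in> Zsp. ?f z = ereal (cpl z)} \<inter> V \<subseteq> dom_op T" using Esub[OF loc] by blast
  next
    assume h: "PrX (fdom ?f) \<inter> V \<subseteq> PrX ({z \<in> Zsp. ?f z \<ge> ereal (cpl z)} \<inter> fdom ?f) \<and>
           PrX {z \<in> Zsp. ?f z = ereal (cpl z)} \<inter> V \<subseteq> dom_op T"
    show "locates V T" unfolding locates_def
    proof
      fix x assume "x \<in> PrX {z \<in> Zsp. ?f z \<le> ereal (cpl z)} \<inter> V"
      then obtain xs where z: "(x,xs) \<in> Zsp" "?f (x,xs) \<le> ereal (xs x)" "x \<in> V"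
        unfolding PrX_def cpl_def by auto
      have "?f (x,xs) < \<infinity>" using z(2) by (metis PInfty_neq_ereal(1) ereal_infty_less(1) le_less_trans)
      hence "x \<in> PrX (fdom ?f) \<inter> V" using z unfolding PrX_def fdom_def
        by (auto intro!: image_eqI[of _ _ "(x,xs)"])
      hence "x \<in> PrX ({z \<in> Zsp. ?f z \<ge> ereal (cpl z)} \<inter> fdom ?f)" using h by blast
      then obtain ys where y: "(x,ys) \<in> Zsp" "?f (x,ys) \<ge> ereal (ys x)" "?f (x,ys) < \<infinity>"
        unfolding PrX_def fdom_def cpl_def by auto
      obtain w where w: "w \<in> dual_space" "?f (x,w) = ereal (w x)"
        using ivt[of xs ys "restr T V" x] z y by (auto simp: Zsp_iff)
      hence "x \<in> PrX {z \<in> Zsp. ?f z = ereal (cpl z)} \<inter> V" using z(3)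
        unfolding PrX_def by (auto simp: cpl_def Zsp_iff intro!: image_eqI[of _ _ "(x,w)"])
      thus "x \<in> dom_op T" using h by blast
    qed
  qed
  have P3: "locates V T \<longleftrightarrow> V_NI V T \<and>
              PrX {z \<in> Zsp. ?f z = ereal (cpl z)} \<inter> V = dom_op T \<inter> V"
    if M: "restr T V \<in> MX"
  proof
    assume loc: "locates V T"
    have "dom_op T \<inter> V \<subseteq> PrX {z \<in> Zsp. ?f z = ereal (cpl z)}"
    proof
      fix x assume "x \<in> dom_op T \<inter> V"
      then obtain u where u: "(x,u) \<in> T" "x \<in> V" unfolding dom_op_def by force
      hence uz: "(x,u) \<in> Zsp" using assms(2) by auto
      have uTV: "(x,u) \<in> restr T V" using u unfolding restr_def by auto
      have mono: "monotone_op (restr T V)" using M unfolding MX_def by auto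
      have "?f (x,u) \<le> ereal (u x)" unfolding fitz_le_iff
      proof
        fix p assume p: "p \<in> restr T V"
        obtain v vs where pv: "p = (v,vs)" by (cases p)
        have "u x - u v - vs x + vs v \<ge> 0"
          using mono uTV p pv unfolding monotone_op_def by fastforce
        thus "snd p (fst (x,u)) + snd (x,u) (fst p) - snd p (fst p) \<le> u x" using pv by simp
      qed
      moreover have "ereal (u x) \<le> ?f (x,u)" using fitz_upper[OF uTV, of "(x,u)"] by simp
      ultimately have "?f (x,u) = ereal (cpl (x,u))" by (simp add: cpl_def)
      thus "x \<in> PrX {z \<in> Zsp. ?f z = ereal (cpl z)}" using uz unfolding PrX_def
        by (auto intro!: image_eqI[of _ _ "(x,u)"])
    qed
    thus "V_NI V T \<and> PrX {z \<in> Zsp. ?f z = ereal (cpl z)} \<inter> V = dom_op T \<inter> V"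
      using NI[OF loc] Esub[OF loc] by blast
  next
    assume "V_NI V T \<and> PrX {z \<in> Zsp. ?f z = ereal (cpl z)} \<inter> V = dom_op T \<inter> V"
    thus "locates V T" using P1 by blast
  qed
  show ?thesis using P1 P2 P3 by blast
qed

end
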